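(* There exist Tychonoff spaces $X$ and $Y$ such that $C_p(X,\mathbb{R})$ and $C_p(Y,\mathbb{R})$ are topologically isomorphic, but $C_p(X,\mathbb{T})$ and $C_p(Y,\mathbb{T})$ are not topologically isomorphic.
   Context: $\mathbb{T}=\mathbb{R}/\mathbb{Z}$. For a topological group $G$, $C_p(X,G)$ is the group of continuous maps $X\to G$ with pointwise group operations and the topology of pointwise convergence; topological isomorphism means isomorphism of topological groups. *)

theory Defs
  imports "HOL-Analysis.Analysis"
begin

definition tychonoff_space :: "'a topology \<Rightarrow> bool" where
  "tychonoff_space X \<longleftrightarrow> completely_regular_space X \<and> t1_space X"

definition Cp_carrier :: "'a topology \<Rightarrow> 'g topology \<Rightarrow> ('a \<Rightarrow> 'g) set" where
  "Cp_carrier X G = {f. f \<in> topspace X \<rightarrow>\<^sub>E topspace G \<and> continuous_map X G f}"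

definition Cp_top :: "'a topology \<Rightarrow> 'g topology \<Rightarrow> ('a \<Rightarrow> 'g) topology" where
  "Cp_top X G = subtopology (product_topology (\<lambda>_. G) (topspace X)) (Cp_carrier X G)"

definition Cp_op :: "'a topology \<Rightarrow> ('g \<Rightarrow> 'g \<Rightarrow> 'g) \<Rightarrow> ('a \<Rightarrow> 'g) \<Rightarrow> ('a \<Rightarrow> 'g) \<Rightarrow> ('a \<Rightarrow> 'g)" where
  "Cp_op X m f g = (\<lambda>x\<in>topspace X. m (f x) (g x))"

definition Cp_top_iso :: "'a topology \<Rightarrow> 'b topology \<Rightarrow> 'g topology \<Rightarrow> ('g \<Rightarrow> 'g \<Rightarrow> 'g) \<Rightarrow> bool" where
  "Cp_top_iso X Y G m \<longleftrightarrow>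
     (\<exists>\<phi>. homeomorphic_map (Cp_top X G) (Cp_top Y G) \<phi> \<and>
          (\<forall>f\<in>Cp_carrier X G. \<forall>g\<in>Cp_carrier X G.
               \<phi> (Cp_op X m f g) = Cp_op Y m (\<phi> f) (\<phi> g)))"

text \<open>The circle group T = R/Z, realised (isomorphically as a topological group)
  as the unit circle in the complex plane under multiplication.\<close>
definition circle_top :: "complex topology" where
  "circle_top = top_of_set (sphere 0 1)"

end

theory Submission
  imports Defs
begin

definition E :: "(nat \<Rightarrow> real) \<Rightarrow> real \<Rightarrow> real" where
  "E w x = w (nat \<lfloor>x\<rfloor>) * (1 - frac x) + w (Suc (nat \<lfloor>x\<rfloor>)) * frac x"

lemma E_nat [simp]: "E w (real n) = w n"
  by (simp add: E_def frac_def)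

lemma E_piece:
  assumes "real m \<le> x" "x \<le> real m + 1"
  shows "E w x = w m * (real m + 1 - x) + w (Suc m) * (x - real m)"
proof (cases "x = real m + 1")
  case True
  then have "x = real (Suc m)" by simp
  then have "E w x = w (Suc m)" by (simp only: E_nat)
  then show ?thesis using True by simp
next
  case False
  then have "x < real m + 1" using assms by simp
  then have fl: "\<lfloor>x\<rfloor> = int m" using assms by (simp add: floor_eq_iff)
  have mx: "max x 0 = x" using assms by simp
  have n: "nat \<lfloor>x\<rfloor> = m" using fl by simp
  have fr: "frac x = x - real m" using fl by (simp add: frac_def)
  show ?thesis unfolding E_def n fr by (simp add: algebra_simps)
qed

lemma E_cont_atMost: "continuous_on {..real n} (\<lambda>x. E w (max x 0))"
proof (induction n)
  case 0
  have "continuous_on {..0::real} (\<lambda>x. w 0)" by simp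
  moreover have "\<And>x::real. x \<in> {..0} \<Longrightarrow> E w (max x 0) = w 0"
    by (simp add: E_def)
  moreover have "continuous_on {..0::real} (\<lambda>x. w 0) = continuous_on {..0::real} (\<lambda>x. E w (max x 0))"
    by (rule continuous_on_cong) (simp_all add: E_def)
  ultimately show ?case by simp
next
  case (Suc n)
  have c2: "continuous_on {real n..real n + 1} (\<lambda>x. E w (max x 0))"
  proof -
    have "continuous_on {real n..real n + 1} (\<lambda>x. w n * (real n + 1 - x) + w (Suc n) * (x - real n))"
      by (intro continuous_intros)
    then show ?thesis
      by (rule continuous_on_cong[THEN iffD1, rotated -1]) (auto simp: E_piece)
  qed
  have "{..real (Suc n)} = {..real n} \<union> {real n..real n + 1}" by auto
  then show ?case using continuous_on_closed_Un[OF _ _ Suc c2] by simp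
qed

lemma E_cont: "continuous_on {0..} (E w)"
proof -
  have "continuous_on (\<Union>n. {..<real n}) (\<lambda>x. E w (max x 0))"
  proof (rule continuous_on_open_UN)
    fix n :: nat
    show "continuous_on {..<real n} (\<lambda>x. E w (max x 0))"
      by (rule continuous_on_subset[OF E_cont_atMost[of n]]) auto
  qed auto
  moreover have "(\<Union>n. {..<real n}) = UNIV"
  proof -
    have "x \<in> (\<Union>n. {..<real n})" for x :: real
      using reals_Archimedean2[of x] by auto
    then show ?thesis by blast
  qed
  ultimately have "continuous_on {0..} (\<lambda>x. E w (max x 0))"
    using continuous_on_subset[of UNIV _ "{0..}"] by auto
  moreover have "continuous_on {0..} (\<lambda>x. E w (max x 0)) = continuous_on {0..} (E w)"
    by (rule continuous_on_cong) auto
  ultimately show ?thesis by simp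
qed


lemma tych_real: "tychonoff_space (top_of_set (T::real set))"
  unfolding tychonoff_space_def
  by (simp add: metrizable_imp_completely_regular_space metrizable_space_subtopology
      metrizable_space_euclidean t1_space_subtopology t1_space_euclidean)

lemma topspace_Cp: "topspace (Cp_top Z G) = Cp_carrier Z G"
  unfolding Cp_top_def Cp_carrier_def by (auto simp: PiE_def Pi_def)

lemma eval_cont: "a \<in> topspace Z \<Longrightarrow> continuous_map (Cp_top Z G) G (\<lambda>k. k a)"
  unfolding Cp_top_def
  by (rule continuous_map_from_subtopology) (rule continuous_map_product_projection)

lemma carrier_R: "h \<in> Cp_carrier (top_of_set D) euclideanreal \<longleftrightarrow> h \<in> extensional D \<and> continuous_on D h"
  unfolding Cp_carrier_def by (auto simp: PiE_def)

lemma carrier_T: "h \<in> Cp_carrier (top_of_set D) (top_of_set T) \<longleftrightarrow> h \<in> D \<rightarrow>\<^sub>E T \<and> continuous_on D h"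
  unfolding Cp_carrier_def by (auto simp: continuous_map_in_subtopology PiE_def Pi_def)

definition SS :: "real set" where "SS = insert (-1) {0..}"

definition dK :: "(real \<Rightarrow> real) \<Rightarrow> nat \<Rightarrow> real" where
  "dK k n = k (real n) - k (real (Suc n))"

definition aG :: "nat \<Rightarrow> real" where "aG n = (if n = 0 then -1 else real n - 1)"

definition dG :: "(real \<Rightarrow> real) \<Rightarrow> nat \<Rightarrow> real" where
  "dG g n = g (aG n) - g (real n)"

definition Psi :: "(real \<Rightarrow> real) \<Rightarrow> (real \<Rightarrow> real)" where
  "Psi k = (\<lambda>y\<in>SS. if y = -1 then k 0 else k y - E (dK k) y)"

definition Phi :: "(real \<Rightarrow> real) \<Rightarrow> (real \<Rightarrow> real)" where
  "Phi g = (\<lambda>x\<in>{0..}. g x + E (dG g) x)"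

lemma aG_in: "aG n \<in> SS" by (simp add: aG_def SS_def)

lemma SS_split: "SS = {-1} \<union> {0..}" by (auto simp: SS_def)

lemma cont_SS:
  assumes "continuous_on {0..} h" shows "continuous_on SS h"
proof -
  have "continuous_on {-1::real} h" by simp
  then have "continuous_on ({-1} \<union> {0..}) h"
    by (rule continuous_on_closed_Un[OF closed_singleton closed_atLeast _ assms])
  then show ?thesis by (simp only: SS_split)
qed

lemma Psi_carrier:
  assumes "k \<in> Cp_carrier (top_of_set {0..}) euclideanreal"
  shows "Psi k \<in> Cp_carrier (top_of_set SS) euclideanreal"
proof -
  have kc: "continuous_on {0..} k" using assms carrier_R by blast
  have "continuous_on {0..} (\<lambda>y. k y - E (dK k) y)"
    by (intro continuous_intros kc E_cont)
  moreover have "continuous_on {0..} (\<lambda>y. k y - E (dK k) y) = continuous_on {0..} (Psi k)"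
    by (rule continuous_on_cong) (auto simp: Psi_def SS_def)
  ultimately have "continuous_on {0..} (Psi k)" by simp
  then have "continuous_on SS (Psi k)" by (rule cont_SS)
  moreover have "Psi k \<in> extensional SS" by (simp add: Psi_def)
  ultimately show ?thesis unfolding carrier_R by blast
qed

lemma Phi_carrier:
  assumes "g \<in> Cp_carrier (top_of_set SS) euclideanreal"
  shows "Phi g \<in> Cp_carrier (top_of_set {0..}) euclideanreal"
proof -
  have "continuous_on SS g" using assms carrier_R by blast
  then have gc: "continuous_on {0..} g" by (rule continuous_on_subset) (auto simp: SS_def)
  have "continuous_on {0..} (\<lambda>y. g y + E (dG g) y)"
    by (intro continuous_intros gc E_cont)
  moreover have "continuous_on {0..} (\<lambda>y. g y + E (dG g) y) = continuous_on {0..} (Phi g)"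
    by (rule continuous_on_cong) (auto simp: Phi_def)
  ultimately show ?thesis unfolding carrier_R by (auto simp: Phi_def)
qed

lemma Phi_Psi:
  assumes "k \<in> Cp_carrier (top_of_set {0..}) euclideanreal"
  shows "Phi (Psi k) = k"
proof -
  have ext: "k \<in> extensional {0..}" using assms carrier_R by blast
  have P0: "Psi k (real n) = k (real (Suc n))" for n
    by (simp add: Psi_def SS_def dK_def)
  have Pm: "Psi k (-1) = k 0" by (simp add: Psi_def SS_def)
  have d: "dG (Psi k) = dK k"
  proof
    fix n show "dG (Psi k) n = dK k n"
    proof (cases n)
      case 0 then show ?thesis
        using P0[of 0] Pm by (simp add: dG_def aG_def dK_def)
    next
      case (Suc m)
      then have "aG n = real m" by (simp add: aG_def)
      then show ?thesis using P0[of m] P0[of n] Suc by (simp add: dG_def dK_def)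
    qed
  qed
  show ?thesis
  proof
    fix x show "Phi (Psi k) x = k x"
    proof (cases "x \<in> {0..}")
      case True
      then have "x \<noteq> -1" by auto
      have "Phi (Psi k) x = Psi k x + E (dK k) x" using True by (simp add: Phi_def d)
      moreover have "Psi k x = k x - E (dK k) x" using True \<open>x \<noteq> -1\<close> by (simp add: Psi_def SS_def)
      ultimately show ?thesis by simp
    next
      case False then show ?thesis using ext by (simp add: Phi_def extensional_def)
    qed
  qed
qed

lemma Psi_Phi:
  assumes "g \<in> Cp_carrier (top_of_set SS) euclideanreal"
  shows "Psi (Phi g) = g"
proof -
  have ext: "g \<in> extensional SS" using assms carrier_R by blast
  have P0: "Phi g (real n) = g (aG n)" for n
    by (simp add: Phi_def dG_def)
  have d: "dK (Phi g) = dG g"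
  proof
    fix n show "dK (Phi g) n = dG g n"
      using P0[of n] P0[of "Suc n"] by (simp add: dK_def dG_def aG_def)
  qed
  show ?thesis
  proof
    fix y show "Psi (Phi g) y = g y"
    proof (cases "y \<in> SS")
      case True
      show ?thesis
      proof (cases "y = -1")
        case True
        then show ?thesis using P0[of 0] by (simp add: Psi_def SS_def aG_def)
      next
        case False
        then have "y \<in> {0..}" using True by (auto simp: SS_def)
        have "Psi (Phi g) y = Phi g y - E (dG g) y" using True False by (simp add: Psi_def d)
        moreover have "Phi g y = g y + E (dG g) y" using \<open>y \<in> {0..}\<close> by (simp add: Phi_def)
        ultimately show ?thesis by simp
      qed
    next
      case False then show ?thesis using ext by (simp add: Psi_def extensional_def)
    qed
  qed
qed


lemma cont_into_Cp:
  "continuous_map Z (Cp_top W G) f \<longleftrightarrow>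
   continuous_map Z (product_topology (\<lambda>_. G) (topspace W)) f \<and> f ` topspace Z \<subseteq> Cp_carrier W G"
  unfolding Cp_top_def[of W] by (simp add: continuous_map_in_subtopology image_subset_iff_funcset)

lemma Psi_cont: "continuous_map (Cp_top (top_of_set {0..}) euclideanreal) (Cp_top (top_of_set SS) euclideanreal) Psi"
  unfolding cont_into_Cp
proof (intro conjI)
  show "Psi ` topspace (Cp_top (top_of_set {0..}) euclideanreal) \<subseteq> Cp_carrier (top_of_set SS) euclideanreal"
    using Psi_carrier by (auto simp: topspace_Cp)
  show "continuous_map (Cp_top (top_of_set {0..}) euclideanreal)
     (product_topology (\<lambda>_. euclideanreal) (topspace (top_of_set SS))) Psi"
    unfolding continuous_map_componentwise
  proof (intro conjI ballI)
    show "Psi ` topspace (Cp_top (top_of_set {0..}) euclideanreal) \<subseteq> extensional (topspace (top_of_set SS))"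
      by (auto simp: Psi_def)
    fix y assume "y \<in> topspace (top_of_set SS)"
    then have y: "y \<in> SS" by simp
    show "continuous_map (Cp_top (top_of_set {0..}) euclideanreal) euclideanreal (\<lambda>k. Psi k y)"
    proof (cases "y = -1")
      case True
      then have "(\<lambda>k. Psi k y) = (\<lambda>k. k 0)" by (simp add: Psi_def SS_def)
      then show ?thesis by (simp add: eval_cont)
    next
      case False
      then have y0: "0 \<le> y" using y by (auto simp: SS_def)
      define n where "n = nat \<lfloor>y\<rfloor>"
      have "(\<lambda>k. Psi k y) = (\<lambda>k. k y - ((k (real n) - k (real (Suc n))) * (1 - frac y)
               + (k (real (Suc n)) - k (real (Suc (Suc n)))) * frac y))"
        using y False by (simp add: Psi_def E_def dK_def n_def)
      moreover have "continuous_map (Cp_top (top_of_set {0..}) euclideanreal) euclideanreal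
          (\<lambda>k. k y - ((k (real n) - k (real (Suc n))) * (1 - frac y)
               + (k (real (Suc n)) - k (real (Suc (Suc n)))) * frac y))"
        using y0 by (intro continuous_map_diff continuous_map_add continuous_map_real_mult
            eval_cont continuous_map_const[THEN iffD2]) auto
      ultimately show ?thesis by simp
    qed
  qed
qed

lemma Phi_cont: "continuous_map (Cp_top (top_of_set SS) euclideanreal) (Cp_top (top_of_set {0..}) euclideanreal) Phi"
  unfolding cont_into_Cp
proof (intro conjI)
  show "Phi ` topspace (Cp_top (top_of_set SS) euclideanreal) \<subseteq> Cp_carrier (top_of_set {0..}) euclideanreal"
    using Phi_carrier by (auto simp: topspace_Cp)
  show "continuous_map (Cp_top (top_of_set SS) euclideanreal)
     (product_topology (\<lambda>_. euclideanreal) (topspace (top_of_set {0..}))) Phi"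
    unfolding continuous_map_componentwise
  proof (intro conjI ballI)
    show "Phi ` topspace (Cp_top (top_of_set SS) euclideanreal) \<subseteq> extensional (topspace (top_of_set {0..}))"
      by (auto simp: Phi_def)
    fix x assume "x \<in> topspace (top_of_set {0::real..})"
    then have x: "0 \<le> x" by simp
    define n where "n = nat \<lfloor>x\<rfloor>"
    have "(\<lambda>g. Phi g x) = (\<lambda>g. g x + ((g (aG n) - g (real n)) * (1 - frac x)
               + (g (aG (Suc n)) - g (real (Suc n))) * frac x))"
      using x by (simp add: Phi_def E_def dG_def n_def)
    moreover have "continuous_map (Cp_top (top_of_set SS) euclideanreal) euclideanreal
          (\<lambda>g. g x + ((g (aG n) - g (real n)) * (1 - frac x)
               + (g (aG (Suc n)) - g (real (Suc n))) * frac x))"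
      using x aG_in by (intro continuous_map_diff continuous_map_add continuous_map_real_mult
            eval_cont continuous_map_const[THEN iffD2]) (auto simp: SS_def)
    ultimately show "continuous_map (Cp_top (top_of_set SS) euclideanreal) euclideanreal (\<lambda>g. Phi g x)" by simp
  qed
qed

lemma R_iso: "Cp_top_iso (top_of_set {0::real..}) (top_of_set SS) euclideanreal (+)"
  unfolding Cp_top_iso_def
proof (rule exI[of _ Psi], intro conjI ballI)
  show "homeomorphic_map (Cp_top (top_of_set {0::real..}) euclideanreal) (Cp_top (top_of_set SS) euclideanreal) Psi"
    unfolding homeomorphic_map_maps homeomorphic_maps_def
    using Psi_cont Phi_cont Phi_Psi Psi_Phi by (auto simp: topspace_Cp)
  fix f g assume f: "f \<in> Cp_carrier (top_of_set {0::real..}) euclideanreal"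
    and g: "g \<in> Cp_carrier (top_of_set {0::real..}) euclideanreal"
  show "Psi (Cp_op (top_of_set {0::real..}) (+) f g) = Cp_op (top_of_set SS) (+) (Psi f) (Psi g)"
  proof
    fix y show "Psi (Cp_op (top_of_set {0::real..}) (+) f g) y = Cp_op (top_of_set SS) (+) (Psi f) (Psi g) y"
    proof (cases "y \<in> SS")
      case True
      show ?thesis
      proof (cases "y = -1")
        case True then show ?thesis by (simp add: Psi_def Cp_op_def SS_def)
      next
        case False
        then have "0 \<le> y" using True by (auto simp: SS_def)
        then show ?thesis using True False
          by (simp add: Psi_def Cp_op_def E_def dK_def algebra_simps)
      qed
    next
      case False then show ?thesis by (simp add: Psi_def Cp_op_def)
    qed
  qed
qed


definition oneC :: "'a topology \<Rightarrow> 'a \<Rightarrow> complex" where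
  "oneC Z = (\<lambda>x\<in>topspace Z. 1)"

lemma circle_carrier: "h \<in> Cp_carrier (top_of_set D) circle_top \<longleftrightarrow> h \<in> D \<rightarrow>\<^sub>E sphere 0 1 \<and> continuous_on D h"
  unfolding circle_top_def carrier_T ..

lemma op_closed:
  assumes "f \<in> Cp_carrier (top_of_set D) circle_top" "g \<in> Cp_carrier (top_of_set D) circle_top"
  shows "Cp_op (top_of_set D) (*) f g \<in> Cp_carrier (top_of_set D) circle_top"
proof -
  have fc: "continuous_on D f" and gc: "continuous_on D g"
    and fs: "f \<in> D \<rightarrow>\<^sub>E sphere 0 1" and gs: "g \<in> D \<rightarrow>\<^sub>E sphere 0 1"
    using circle_carrier[THEN iffD1, OF assms(1)] circle_carrier[THEN iffD1, OF assms(2)] by auto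
  have c1: "continuous_on D (\<lambda>x. f x * g x)" by (intro continuous_intros fc gc)
  have eq: "continuous_on D (\<lambda>x. f x * g x) = continuous_on D (Cp_op (top_of_set D) (*) f g)"
    by (rule continuous_on_cong) (auto simp: Cp_op_def)
  have c2: "continuous_on D (Cp_op (top_of_set D) (*) f g)" using eq c1 by (rule iffD1)
  moreover have "Cp_op (top_of_set D) (*) f g \<in> D \<rightarrow>\<^sub>E sphere 0 1"
  proof -
    have "f x * g x \<in> sphere 0 1" if "x \<in> D" for x
    proof -
      have "f x \<in> sphere 0 1" "g x \<in> sphere 0 1" using fs gs that by (auto dest: PiE_mem)
      then show ?thesis by (simp add: norm_mult)
    qed
    then show ?thesis unfolding Cp_op_def by (simp add: restrict_PiE_iff)
  qed
  ultimately show ?thesis unfolding circle_carrier by blast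
qed

lemma one_closed: "oneC (top_of_set D) \<in> Cp_carrier (top_of_set D) circle_top"
proof -
  have c1: "continuous_on D (\<lambda>x. 1::complex)" by simp
  have eq: "continuous_on D (\<lambda>x. 1::complex) = continuous_on D (oneC (top_of_set D))"
    by (rule continuous_on_cong) (auto simp: oneC_def)
  have "continuous_on D (oneC (top_of_set D))" using eq c1 by (rule iffD1)
  moreover have "oneC (top_of_set D) \<in> D \<rightarrow>\<^sub>E sphere 0 1"
    by (auto simp: oneC_def)
  ultimately show ?thesis unfolding circle_carrier by blast
qed

lemma AX_two:
  assumes f: "f \<in> Cp_carrier (top_of_set {0::real..}) circle_top"
    and sq: "Cp_op (top_of_set {0::real..}) (*) f f = oneC (top_of_set {0::real..})"
  shows "f \<in> {oneC (top_of_set {0::real..}), (\<lambda>x\<in>{0::real..}. -1)}"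
proof -
  have fcs: "f \<in> {0..} \<rightarrow>\<^sub>E sphere 0 1 \<and> continuous_on {0..} f"
    using circle_carrier[THEN iffD1, OF f] .
  then have fc: "continuous_on {0..} f" and fs: "f \<in> {0..} \<rightarrow>\<^sub>E sphere 0 1" by auto
  have pm: "f x = 1 \<or> f x = -1" if "x \<in> {0..}" for x
  proof -
    have "Cp_op (top_of_set {0::real..}) (*) f f x = oneC (top_of_set {0::real..}) x" using sq by simp
    then have "f x * f x = 1" using that by (simp add: Cp_op_def oneC_def)
    then show ?thesis by (simp add: square_eq_1_iff)
  qed
  have "f constant_on {0..}"
  proof (rule continuous_discrete_range_constant[OF connected_Ici fc])
    fix x :: real assume x: "x \<in> {0..}"
    show "\<exists>e>0. \<forall>y. y \<in> {0..} \<and> f y \<noteq> f x \<longrightarrow> e \<le> norm (f y - f x)"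
    proof (intro exI[of _ 1] conjI allI impI)
      fix y assume "y \<in> {0::real..} \<and> f y \<noteq> f x"
      then have "f y \<noteq> f x" "y \<in> {0..}" by auto
      then show "1 \<le> norm (f y - f x)" using pm[of x] pm[of y] x by fastforce
    qed simp
  qed
  then obtain c where c: "\<And>x. x \<in> {0..} \<Longrightarrow> f x = c" unfolding constant_on_def by blast
  have ext: "\<And>x. x \<notin> {0..} \<Longrightarrow> f x = undefined" using fs by (auto simp: PiE_def extensional_def)
  have "c = 1 \<or> c = -1" using pm[of 0] c[of 0] by simp
  then show ?thesis
  proof
    assume "c = 1"
    have "f = oneC (top_of_set {0::real..})"
    proof
      fix x show "f x = oneC (top_of_set {0::real..}) x"
        by (cases "x \<in> {0..}") (simp_all add: oneC_def c ext \<open>c = 1\<close>)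
    qed
    then show ?thesis by simp
  next
    assume "c = -1"
    have "f = (\<lambda>x\<in>{0::real..}. -1)"
    proof
      fix x show "f x = (\<lambda>x\<in>{0::real..}. -1) x"
        by (cases "x \<in> {0..}") (simp_all add: c ext \<open>c = -1\<close>)
    qed
    then show ?thesis by simp
  qed
qed


lemma SS_elem:
  fixes a b :: complex
  assumes "norm a = 1" "norm b = 1"
  shows "(\<lambda>y\<in>SS. if y = -1 then a else b) \<in> Cp_carrier (top_of_set SS) circle_top"
proof -
  have c1: "continuous_on {0::real..} (\<lambda>y. b)" by simp
  have eq: "continuous_on {0::real..} (\<lambda>y. b) = continuous_on {0..} (\<lambda>y\<in>SS. if y = -1 then a else b)"
    by (rule continuous_on_cong) (auto simp: SS_def)
  have "continuous_on {0..} (\<lambda>y\<in>SS. if y = -1 then a else b)" using eq c1 by (rule iffD1)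
  then have "continuous_on SS (\<lambda>y\<in>SS. if y = -1 then a else b)" by (rule cont_SS)
  moreover have "(\<lambda>y\<in>SS. if y = -1 then a else b) \<in> SS \<rightarrow>\<^sub>E sphere 0 1"
    using assms by (simp add: restrict_PiE_iff)
  ultimately show ?thesis unfolding circle_carrier by blast
qed

lemma SS_elem_sq:
  fixes a b :: complex
  assumes "a * a = 1" "b * b = 1"
  shows "Cp_op (top_of_set SS) (*) (\<lambda>y\<in>SS. if y = -1 then a else b) (\<lambda>y\<in>SS. if y = -1 then a else b)
         = oneC (top_of_set SS)"
proof
  fix y show "Cp_op (top_of_set SS) (*) (\<lambda>y\<in>SS. if y = -1 then a else b) (\<lambda>y\<in>SS. if y = -1 then a else b) y
         = oneC (top_of_set SS) y"
    using assms by (simp add: Cp_op_def oneC_def)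
qed

lemma T_not_iso: "\<not> Cp_top_iso (top_of_set {0::real..}) (top_of_set SS) circle_top (*)"
proof
  assume "Cp_top_iso (top_of_set {0::real..}) (top_of_set SS) circle_top (*)"
  then obtain \<phi> where hm: "homeomorphic_map (Cp_top (top_of_set {0::real..}) circle_top) (Cp_top (top_of_set SS) circle_top) \<phi>"
    and hom: "\<And>f g. f \<in> Cp_carrier (top_of_set {0::real..}) circle_top \<Longrightarrow> g \<in> Cp_carrier (top_of_set {0::real..}) circle_top \<Longrightarrow>
         \<phi> (Cp_op (top_of_set {0::real..}) (*) f g) = Cp_op (top_of_set SS) (*) (\<phi> f) (\<phi> g)"
    unfolding Cp_top_iso_def by blast
  define CX where "CX = Cp_carrier (top_of_set {0::real..}) circle_top"
  define CY where "CY = Cp_carrier (top_of_set SS) circle_top"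
  define oX where "oX = oneC (top_of_set {0::real..})"
  define oY where "oY = oneC (top_of_set SS)"
  have surj: "\<phi> ` CX = CY" using homeomorphic_imp_surjective_map[OF hm] by (simp add: topspace_Cp CX_def CY_def)
  have inj: "inj_on \<phi> CX" using homeomorphic_imp_injective_map[OF hm] by (simp add: topspace_Cp CX_def)
  have oXc: "oX \<in> CX" unfolding oX_def CX_def by (rule one_closed)
  have oXsq: "Cp_op (top_of_set {0::real..}) (*) oX oX = oX"
  proof
    fix x show "Cp_op (top_of_set {0::real..}) (*) oX oX x = oX x" by (simp add: Cp_op_def oX_def oneC_def)
  qed
  have pY: "\<phi> oX \<in> CY" using surj oXc by blast
  then have pYs: "\<phi> oX \<in> SS \<rightarrow>\<^sub>E sphere 0 1" unfolding CY_def using circle_carrier[THEN iffD1] by blast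
  have peq: "\<phi> oX = Cp_op (top_of_set SS) (*) (\<phi> oX) (\<phi> oX)"
    using hom[OF oXc[unfolded CX_def] oXc[unfolded CX_def]] oXsq by simp
  have phi1: "\<phi> oX = oY"
  proof
    fix y show "\<phi> oX y = oY y"
    proof (cases "y \<in> SS")
      case True
      have "\<phi> oX y = \<phi> oX y * \<phi> oX y"
        using fun_cong[OF peq, of y] True by (simp add: Cp_op_def)
      moreover have "\<phi> oX y \<in> sphere 0 1" using pYs True by (auto dest: PiE_mem)
      then have "\<phi> oX y \<noteq> 0" by auto
      ultimately have "\<phi> oX y = 1" by (metis mult_cancel_left mult.right_neutral)
      then show ?thesis using True by (simp add: oY_def oneC_def)
    next
      case False
      then show ?thesis using pYs by (simp add: oY_def oneC_def PiE_def extensional_def)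
    qed
  qed
  define AX where "AX = {f \<in> CX. Cp_op (top_of_set {0::real..}) (*) f f = oX}"
  define AY where "AY = {g \<in> CY. Cp_op (top_of_set SS) (*) g g = oY}"
  have sub: "AY \<subseteq> \<phi> ` AX"
  proof
    fix g assume g: "g \<in> AY"
    then have "g \<in> CY" by (simp add: AY_def)
    then obtain f where f: "f \<in> CX" and gf: "g = \<phi> f" using surj by blast
    have ffc: "Cp_op (top_of_set {0::real..}) (*) f f \<in> CX" using op_closed f unfolding CX_def by blast
    have "\<phi> (Cp_op (top_of_set {0::real..}) (*) f f) = Cp_op (top_of_set SS) (*) g g"
      using hom f gf unfolding CX_def by simp
    also have "\<dots> = \<phi> oX" using g phi1 by (simp add: AY_def)
    finally have "Cp_op (top_of_set {0::real..}) (*) f f = oX"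
      using inj ffc oXc by (meson inj_on_def)
    then show "g \<in> \<phi> ` AX" using f gf by (auto simp: AX_def)
  qed
  have AXs: "AX \<subseteq> {oX, (\<lambda>x\<in>{0::real..}. -1)}"
    using AX_two unfolding AX_def CX_def oX_def by blast
  have fin: "finite AX" using finite_subset[OF AXs] by simp
  have "card AY \<le> card (\<phi> ` AX)" using card_mono[OF finite_imageI[OF fin] sub] .
  also have "\<dots> \<le> card AX" using card_image_le[OF fin] .
  also have "\<dots> \<le> card {oX, (\<lambda>x\<in>{0::real..}. -1)}" using card_mono[OF _ AXs] by simp
  also have "\<dots> \<le> 2" by (simp add: card_insert_le_m1)
  finally have le2: "card AY \<le> 2" .
  define u1 where "u1 = (\<lambda>y\<in>SS. if y = -1 then (-1::complex) else 1)"
  define u2 where "u2 = (\<lambda>y\<in>SS. if y = -1 then (1::complex) else -1)"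
  define u3 where "u3 = oY"
  have inA12: "u \<in> AY" if "u \<in> {u1, u2}" for u
    using that unfolding AY_def CY_def u1_def u2_def oY_def
    by (auto intro!: SS_elem SS_elem_sq)
  have "u3 \<in> CY" unfolding u3_def oY_def CY_def by (rule one_closed)
  moreover have "Cp_op (top_of_set SS) (*) u3 u3 = oY"
  proof
    fix y show "Cp_op (top_of_set SS) (*) u3 u3 y = oY y" by (simp add: Cp_op_def u3_def oY_def oneC_def)
  qed
  ultimately have "u3 \<in> AY" by (simp add: AY_def)
  then have inA: "u \<in> AY" if "u \<in> {u1, u2, u3}" for u using inA12 that by blast
  have m1: "-1 \<in> SS" and z: "0 \<in> SS" by (auto simp: SS_def)
  have d12: "u1 \<noteq> u2"
  proof
    assume "u1 = u2" then have "u1 (-1) = u2 (-1)" by simp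
    then show False using m1 by (simp add: u1_def u2_def)
  qed
  have d13: "u1 \<noteq> u3"
  proof
    assume "u1 = u3" then have "u1 (-1) = u3 (-1)" by simp
    then show False using m1 by (simp add: u1_def u3_def oY_def oneC_def)
  qed
  have d23: "u2 \<noteq> u3"
  proof
    assume "u2 = u3" then have "u2 0 = u3 0" by simp
    then show False using z by (simp add: u2_def u3_def oY_def oneC_def)
  qed
  have "3 = card {u1, u2, u3}" using d12 d13 d23 by simp
  also have "\<dots> \<le> card AY"
  proof (rule card_mono)
    show "finite AY" using finite_subset[OF sub] fin by simp
    show "{u1, u2, u3} \<subseteq> AY" using inA by blast
  qed
  finally show False using le2 by simp
qed

theorem proposition10p11:
  shows "\<exists>(X::real topology) (Y::real topology).
           tychonoff_space X \<and> tychonoff_space Y \<and>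
           Cp_top_iso X Y euclideanreal (+) \<and>
           \<not> Cp_top_iso X Y circle_top (*)"
  using tych_real R_iso T_not_iso by blast

end
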